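(* Let $D^2\times S^1=\{((r,\phi),t): r\in[0,1],\ \phi,t\in[0,2\pi)\}$ with polar coordinates $(r,\phi)$ on the unit disk $D^2$. There exist a smooth codimension-one foliation $\mathcal{F}$ and a smooth Riemannian metric $g$ on $D^2\times S^1$ such that: (1) $\mathcal{F}$ is parabolic with respect to $g$; (2) the restriction of $\mathcal{F}$ to $D^2(\tfrac13)\times S^1=\{r\le \tfrac13\}$ is the foliation by the disks $D^2(\tfrac13)\times\{t\}$, which are totally geodesic with respect to $g$, and the restriction of $\mathcal{F}$ to $\{\tfrac23\le r\le 1\}$ is the foliation by the tori $\{r\}\times S^1\times S^1$, which are totally geodesic with respect to $g$.
   Context: For a foliation $\mathcal{F}$ of a Riemannian 3-manifold, with tangent plane distribution $\xi$, unit normal $n$ and Levi-Civita connection $\nabla$, the second fundamental form is $B(S,T)=\tfrac12\langle\nabla_ST+\nabla_TS,n\rangle$ for $S,T$ tangent to $\xi$, and the extrinsic curvature is $K_e=\det B/\det\langle\cdot,\cdot\rangle|_\xi$. The foliation is parabolic with respect to $g$ if $K_e\equiv0$, and a leaf is totally geodesic if $B\equiv 0$ on it. *)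

theory Defs
  imports "HOL-Analysis.Analysis"
begin

text \<open>Coordinates: a point p :: real^3 stands for (x,y,t) = (p$1, p$2, p$3), where
  (x,y) are Cartesian coordinates on the disk (x = r cos phi, y = r sin phi) and t is the
  S^1 coordinate, with everything 2 pi periodic in t.  D^2 x S^1 is the closed region
  x^2 + y^2 <= 1 modulo t ~ t + 2 pi.  Smooth objects on the manifold with boundary are
  represented by smooth functions on all of real^3 (Seeley/Whitney extension), 2 pi
  periodic in t; all geometric conditions are imposed only on the region.\<close>

definition pd :: "3 \<Rightarrow> (real^3 \<Rightarrow> real) \<Rightarrow> real^3 \<Rightarrow> real" where
  "pd i f p = frechet_derivative f (at p) (axis i 1)"

fun Ck :: "nat \<Rightarrow> (real^3 \<Rightarrow> real) \<Rightarrow> bool" where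
  "Ck 0 f = continuous_on UNIV f"
| "Ck (Suc k) f = ((\<forall>p. f differentiable (at p)) \<and> (\<forall>i. Ck k (pd i f)))"

definition smooth_fun :: "(real^3 \<Rightarrow> real) \<Rightarrow> bool" where
  "smooth_fun f \<longleftrightarrow> (\<forall>k. Ck k f)"

definition smooth_vf :: "(real^3 \<Rightarrow> real^3) \<Rightarrow> bool" where
  "smooth_vf V \<longleftrightarrow> (\<forall>i. smooth_fun (\<lambda>p. V p $ i))"

definition region :: "(real^3) set" where
  "region = {p. (p$1)^2 + (p$2)^2 \<le> 1}"

definition t_periodic :: "(real^3 \<Rightarrow> 'a) \<Rightarrow> bool" where
  "t_periodic f \<longleftrightarrow> (\<forall>p. f (p + axis 3 (2*pi)) = f p)"

definition riem_metric :: "(real^3 \<Rightarrow> real^3^3) \<Rightarrow> bool" where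
  "riem_metric g \<longleftrightarrow> (\<forall>i j. smooth_fun (\<lambda>p. g p $ i $ j)) \<and> t_periodic g \<and>
     (\<forall>p\<in>region. \<forall>i j. g p $ i $ j = g p $ j $ i) \<and>
     (\<forall>p\<in>region. \<forall>u. u \<noteq> 0 \<longrightarrow> (\<Sum>i\<in>UNIV. \<Sum>j\<in>UNIV. g p $ i $ j * u$i * u$j) > 0)"

definition ginner :: "(real^3 \<Rightarrow> real^3^3) \<Rightarrow> real^3 \<Rightarrow> real^3 \<Rightarrow> real^3 \<Rightarrow> real" where
  "ginner g p u v = (\<Sum>i\<in>UNIV. \<Sum>j\<in>UNIV. g p $ i $ j * u$i * v$j)"

definition christoffel :: "(real^3 \<Rightarrow> real^3^3) \<Rightarrow> 3 \<Rightarrow> 3 \<Rightarrow> 3 \<Rightarrow> real^3 \<Rightarrow> real" where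
  "christoffel g k i j p = (1/2) * (\<Sum>l\<in>UNIV. matrix_inv (g p) $ k $ l *
      (pd i (\<lambda>q. g q $ j $ l) p + pd j (\<lambda>q. g q $ i $ l) p - pd l (\<lambda>q. g q $ i $ j) p))"

definition lc_nabla :: "(real^3 \<Rightarrow> real^3^3) \<Rightarrow> (real^3 \<Rightarrow> real^3) \<Rightarrow> (real^3 \<Rightarrow> real^3) \<Rightarrow> real^3 \<Rightarrow> real^3" where
  "lc_nabla g S T p = (\<chi> k. (\<Sum>i\<in>UNIV. S p $ i * pd i (\<lambda>q. T q $ k) p)
      + (\<Sum>i\<in>UNIV. \<Sum>j\<in>UNIV. christoffel g k i j p * S p $ i * T p $ j))"

text \<open>Codimension-one foliation given by a nonvanishing integrable 1-form omega
  (components omega_x, omega_y, omega_t); its tangent plane distribution is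
  xi_p = ker omega_p.  Integrability (Frobenius): omega wedge d omega = 0,
  i.e. omega . curl omega = 0.\<close>
definition curl :: "(real^3 \<Rightarrow> real^3) \<Rightarrow> real^3 \<Rightarrow> real^3" where
  "curl w p = vector [pd 2 (\<lambda>q. w q $ 3) p - pd 3 (\<lambda>q. w q $ 2) p,
                      pd 3 (\<lambda>q. w q $ 1) p - pd 1 (\<lambda>q. w q $ 3) p,
                      pd 1 (\<lambda>q. w q $ 2) p - pd 2 (\<lambda>q. w q $ 1) p]"

definition foliation_form :: "(real^3 \<Rightarrow> real^3) \<Rightarrow> bool" where
  "foliation_form w \<longleftrightarrow> smooth_vf w \<and> t_periodic w \<and>
     (\<forall>p\<in>region. w p \<noteq> 0) \<and> (\<forall>p\<in>region. w p \<bullet> curl w p = 0)"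

definition tangent_vf :: "(real^3 \<Rightarrow> real^3) \<Rightarrow> (real^3 \<Rightarrow> real^3) \<Rightarrow> bool" where
  "tangent_vf w S \<longleftrightarrow> smooth_vf S \<and> (\<forall>p\<in>region. w p \<bullet> S p = 0)"

definition unit_normal :: "(real^3 \<Rightarrow> real^3^3) \<Rightarrow> (real^3 \<Rightarrow> real^3) \<Rightarrow> real^3 \<Rightarrow> real^3" where
  "unit_normal g w p = (let v = matrix_inv (g p) *v w p in (1 / sqrt (ginner g p v v)) *\<^sub>R v)"

definition sff :: "(real^3 \<Rightarrow> real^3^3) \<Rightarrow> (real^3 \<Rightarrow> real^3) \<Rightarrow> (real^3 \<Rightarrow> real^3) \<Rightarrow> (real^3 \<Rightarrow> real^3) \<Rightarrow> real^3 \<Rightarrow> real" where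
  "sff g w S T p = (1/2) * ginner g p (lc_nabla g S T p + lc_nabla g T S p) (unit_normal g w p)"

definition ext_curv :: "(real^3 \<Rightarrow> real^3^3) \<Rightarrow> (real^3 \<Rightarrow> real^3) \<Rightarrow> (real^3 \<Rightarrow> real^3) \<Rightarrow> (real^3 \<Rightarrow> real^3) \<Rightarrow> real^3 \<Rightarrow> real" where
  "ext_curv g w E1 E2 p =
     (sff g w E1 E1 p * sff g w E2 E2 p - sff g w E1 E2 p * sff g w E2 E1 p) /
     (ginner g p (E1 p) (E1 p) * ginner g p (E2 p) (E2 p) - ginner g p (E1 p) (E2 p) * ginner g p (E2 p) (E1 p))"

definition parabolic :: "(real^3 \<Rightarrow> real^3^3) \<Rightarrow> (real^3 \<Rightarrow> real^3) \<Rightarrow> bool" where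
  "parabolic g w \<longleftrightarrow> (\<forall>p\<in>region. \<forall>E1 E2. tangent_vf w E1 \<and> tangent_vf w E2 \<and>
      \<not> collinear {0, E1 p, E2 p} \<longrightarrow> ext_curv g w E1 E2 p = 0)"

definition totally_geodesic_on :: "(real^3 \<Rightarrow> real^3^3) \<Rightarrow> (real^3 \<Rightarrow> real^3) \<Rightarrow> (real^3) set \<Rightarrow> bool" where
  "totally_geodesic_on g w A \<longleftrightarrow> (\<forall>p\<in>A. \<forall>S T. tangent_vf w S \<and> tangent_vf w T \<longrightarrow> sff g w S T p = 0)"

definition inner_part :: "(real^3) set" where
  "inner_part = {p. (p$1)^2 + (p$2)^2 \<le> (1/3)^2}"

definition outer_part :: "(real^3) set" where
  "outer_part = {p. (2/3)^2 \<le> (p$1)^2 + (p$2)^2 \<and> (p$1)^2 + (p$2)^2 \<le> 1}"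

end

theory Submission
  imports Defs "HOL-Computational_Algebra.Polynomial"
begin


lemma pd_has: "(f has_derivative f') (at p) \<Longrightarrow> pd i f p = f' (axis i 1)"
  unfolding pd_def using frechet_derivative_at by metis

lemma Ck_diff: "Ck (Suc k) f \<Longrightarrow> f differentiable (at p)" by simp

lemma Ck_Suc_imp: "Ck (Suc k) f \<Longrightarrow> Ck k f"
proof (induction k arbitrary: f)
  case 0
  then show ?case
    by (auto intro!: continuous_at_imp_continuous_on differentiable_imp_continuous_within)
next
  case (Suc k)
  then show ?case by (metis Ck.simps(2))
qed

lemma Ck_le: "Ck k f \<Longrightarrow> m \<le> k \<Longrightarrow> Ck m f"
proof (induction k)
  case 0 then show ?case by simp
next
  case (Suc k) then show ?case using Ck_Suc_imp by (metis le_Suc_eq)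
qed

lemma pd_add: "f differentiable (at p) \<Longrightarrow> g differentiable (at p) \<Longrightarrow>
   pd i (\<lambda>q. f q + g q) p = pd i f p + pd i g p"
proof -
  assume f: "f differentiable (at p)" and g: "g differentiable (at p)"
  have "((\<lambda>q. f q + g q) has_derivative (\<lambda>h. frechet_derivative f (at p) h + frechet_derivative g (at p) h)) (at p)"
    using f g by (intro has_derivative_add) (simp_all add: frechet_derivative_works)
  from pd_has[OF this] show ?thesis unfolding pd_def by simp
qed

lemma pd_mult: "f differentiable (at p) \<Longrightarrow> g differentiable (at p) \<Longrightarrow>
   pd i (\<lambda>q. f q * g q) p = pd i f p * g p + f p * pd i g p"
proof -
  assume f: "f differentiable (at p)" and g: "g differentiable (at p)"
  have "((\<lambda>q. f q * g q) has_derivative (\<lambda>h. f p * frechet_derivative g (at p) h + frechet_derivative f (at p) h * g p)) (at p)"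
    using f g by (intro has_derivative_mult) (simp_all add: frechet_derivative_works)
  from pd_has[OF this] show ?thesis unfolding pd_def by simp
qed

lemma pd_comp: "(\<phi> has_real_derivative d) (at (u p)) \<Longrightarrow> u differentiable (at p) \<Longrightarrow>
   pd i (\<lambda>q. \<phi> (u q)) p = d * pd i u p"
proof -
  assume f: "(\<phi> has_real_derivative d) (at (u p))" and g: "u differentiable (at p)"
  have "((\<lambda>q. \<phi> (u q)) has_derivative (\<lambda>h. d * frechet_derivative u (at p) h)) (at p)"
    using has_derivative_compose[of u "frechet_derivative u (at p)" p UNIV \<phi> "(*) d"] f g
    by (simp add: frechet_derivative_works has_field_derivative_def)
  from pd_has[OF this] show ?thesis unfolding pd_def by simp
qed

lemma comp_diff: "(\<phi> has_real_derivative d) (at (u p)) \<Longrightarrow> u differentiable (at p) \<Longrightarrow>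
   (\<lambda>q. \<phi> (u q)) differentiable (at p)"
proof -
  assume f: "(\<phi> has_real_derivative d) (at (u p))" and g: "u differentiable (at p)"
  have "((\<lambda>q. \<phi> (u q)) has_derivative (\<lambda>h. d * frechet_derivative u (at p) h)) (at p)"
    using has_derivative_compose[of u "frechet_derivative u (at p)" p UNIV \<phi> "(*) d"] f g
    by (simp add: frechet_derivative_works has_field_derivative_def)
  then show ?thesis unfolding differentiable_def by blast
qed

lemma pd_const: "pd i (\<lambda>q. c) p = 0"
  using pd_has[OF has_derivative_const] by simp

lemma pd_coord: "pd i (\<lambda>q. q $ j) p = (if i = j then 1 else 0)"
proof -
  have "((\<lambda>q::real^3. q $ j) has_derivative (\<lambda>h. h $ j)) (at p)"
    by (rule bounded_linear_imp_has_derivative) (simp add: bounded_linear_vec_nth bounded_linear_ident)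
  then show ?thesis using pd_has by (fastforce simp: axis_def)
qed

lemma pd_const_fun: "pd i (\<lambda>q. c) = (\<lambda>q. 0)"
  by (rule ext) (rule pd_const)

lemma Ck_const: "Ck k (\<lambda>q. c)"
  by (induction k arbitrary: c) (auto simp: pd_const_fun)

lemma Ck_add: "Ck k f \<Longrightarrow> Ck k g \<Longrightarrow> Ck k (\<lambda>q. f q + g q)"
proof (induction k arbitrary: f g)
  case 0 then show ?case by (auto intro: continuous_on_add)
next
  case (Suc k)
  have e: "pd i (\<lambda>q. f q + g q) = (\<lambda>q. pd i f q + pd i g q)" for i
    using Suc.prems by (auto simp: pd_add)
  show ?case using Suc by (auto simp: e)
qed

lemma Ck_mult: "Ck k f \<Longrightarrow> Ck k g \<Longrightarrow> Ck k (\<lambda>q. f q * g q)"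
proof (induction k arbitrary: f g)
  case 0 then show ?case by (auto intro: continuous_on_mult)
next
  case (Suc k)
  have e: "pd i (\<lambda>q. f q * g q) = (\<lambda>q. pd i f q * g q + f q * pd i g q)" for i
    using Suc.prems by (auto simp: pd_mult)
  have "Ck k f" "Ck k g" using Suc.prems Ck_Suc_imp by blast+
  then show ?case using Suc by (auto simp: e intro!: Ck_add differentiable_mult)
qed

lemma Ck_coord: "Ck k (\<lambda>q. q $ j)"
proof (cases k)
  case 0 then show ?thesis by (simp add: linear_continuous_on bounded_linear_vec_nth bounded_linear_ident)
next
  case (Suc m)
  have "(\<lambda>q::real^3. q $ j) differentiable (at p)" for p
    by (rule bounded_linear_imp_differentiable) (simp add: bounded_linear_vec_nth bounded_linear_ident)
  moreover have "pd i (\<lambda>q. q $ j) = (\<lambda>q. if i = j then 1 else 0)" for i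
    by (auto simp: pd_coord)
  ultimately show ?thesis using Suc by (auto simp: Ck_const)
qed

definition dseq :: "real set \<Rightarrow> (nat \<Rightarrow> real \<Rightarrow> real) \<Rightarrow> bool" where
  "dseq U D \<longleftrightarrow> (\<forall>n x. x \<in> U \<longrightarrow> (D n has_real_derivative D (Suc n) x) (at x))"

lemma Ck_comp: "dseq U D \<Longrightarrow> (\<forall>p. u p \<in> U) \<Longrightarrow> smooth_fun u \<Longrightarrow> Ck k (\<lambda>q. D n (u q))"
proof (induction k arbitrary: n)
  case 0
  have "continuous_on UNIV u" using 0 unfolding smooth_fun_def by (metis Ck.simps(1))
  moreover have "isCont (D n) (u p)" for p using 0 unfolding dseq_def
    using DERIV_isCont by blast
  ultimately have "isCont (\<lambda>q. D n (u q)) p" for p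
    using continuous_at_compose[of p u "D n"] continuous_on_eq_continuous_at[of UNIV u]
    by (simp add: o_def)
  then show ?case by (simp add: continuous_at_imp_continuous_on)
next
  case (Suc k)
  have ud: "u differentiable (at p)" for p using Suc.prems unfolding smooth_fun_def
    by (metis Ck.simps(2))
  have dd: "(D n has_real_derivative D (Suc n) (u p)) (at (u p))" for p n
    using Suc.prems unfolding dseq_def by blast
  have e: "pd i (\<lambda>q. D n (u q)) = (\<lambda>q. D (Suc n) (u q) * pd i u q)" for i
    using pd_comp[OF dd ud] by auto
  have "Ck k (pd i u)" for i using Suc.prems unfolding smooth_fun_def by (metis Ck.simps(2))
  moreover have "(\<lambda>q. D n (u q)) differentiable (at p)" for p
    using comp_diff[OF dd ud] .
  ultimately show ?case using Suc by (auto simp: e intro!: Ck_mult)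
qed

lemma smooth_const: "smooth_fun (\<lambda>q. c)" by (simp add: smooth_fun_def Ck_const)
lemma smooth_coord: "smooth_fun (\<lambda>q. q $ j)" by (simp add: smooth_fun_def Ck_coord)
lemma smooth_add: "smooth_fun f \<Longrightarrow> smooth_fun g \<Longrightarrow> smooth_fun (\<lambda>q. f q + g q)"
  by (simp add: smooth_fun_def Ck_add)
lemma smooth_mult: "smooth_fun f \<Longrightarrow> smooth_fun g \<Longrightarrow> smooth_fun (\<lambda>q. f q * g q)"
  by (simp add: smooth_fun_def Ck_mult)
lemma smooth_comp: "dseq U D \<Longrightarrow> (\<forall>p. u p \<in> U) \<Longrightarrow> smooth_fun u \<Longrightarrow> smooth_fun (\<lambda>q. D n (u q))"
  by (simp add: smooth_fun_def Ck_comp)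
lemma smooth_diff: "smooth_fun f \<Longrightarrow> smooth_fun g \<Longrightarrow> smooth_fun (\<lambda>q. f q - g q)"
  using smooth_add[of f "\<lambda>q. (-1) * g q"] smooth_mult[OF smooth_const, of g "-1"] by simp
lemma smooth_differentiable: "smooth_fun f \<Longrightarrow> f differentiable (at p)"
  unfolding smooth_fun_def by (metis Ck.simps(2))


lemma lim_polyexp: "((\<lambda>x::real. poly P x * x^k * exp(-x)) \<longlongrightarrow> 0) at_top"
proof (induction P arbitrary: k rule: pCons_induct)
  case 0 then show ?case by simp
next
  case (pCons c q)
  have e: "poly (pCons c q) x * x^k * exp(-x) = c * (x^k / exp x) + poly q x * x^(Suc k) * exp(-x)" for x
    by (simp add: exp_minus field_simps)
  show ?case unfolding e
    using tendsto_add[OF tendsto_mult[OF tendsto_const tendsto_power_div_exp_0] pCons.IH[of "Suc k"]]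
    by simp
qed

fun EP :: "nat \<Rightarrow> real poly" where
  "EP 0 = 1"
| "EP (Suc n) = [:0,0,1:] * (EP n - pderiv (EP n))"

definition ED :: "nat \<Rightarrow> real \<Rightarrow> real" where
  "ED n t = (if 0 < t then poly (EP n) (inverse t) * exp (- inverse t) else 0)"

lemma ED_pos_deriv:
  assumes "0 < t"
  shows "((\<lambda>t. poly (EP n) (inverse t) * exp (- inverse t)) has_real_derivative
     poly (EP (Suc n)) (inverse t) * exp (- inverse t)) (at t)"
proof -
  have "((\<lambda>t. poly (EP n) (inverse t) * exp (- inverse t)) has_real_derivative
     (poly (pderiv (EP n)) (inverse t) * (- inverse (t^2))) * exp (- inverse t) +
      poly (EP n) (inverse t) * (exp (- inverse t) * inverse (t^2))) (at t)"
    using assms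
    by (auto intro!: derivative_eq_intros DERIV_chain2[OF poly_DERIV] simp: power2_eq_square)
  moreover have "(poly (pderiv (EP n)) (inverse t) * (- inverse (t^2))) * exp (- inverse t) +
      poly (EP n) (inverse t) * (exp (- inverse t) * inverse (t^2)) =
      poly (EP (Suc n)) (inverse t) * exp (- inverse t)"
    by (simp add: algebra_simps power2_eq_square)
  ultimately show ?thesis by simp
qed

lemma ED_deriv: "(ED n has_real_derivative ED (Suc n) t) (at t)"
proof (cases "0 < t")
  case True
  show ?thesis
    apply (rule has_field_derivative_transform_within_open[of _ _ _ "{0<..}"])
    using ED_pos_deriv[OF True] True by (auto simp: ED_def)
next
  case False
  show ?thesis
  proof (cases "t < 0")
    case True
    have "(ED n has_real_derivative 0) (at t)"
      apply (rule has_field_derivative_transform_within_open[of "\<lambda>_. 0" _ _ "{..<0}"])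
      using True by (auto simp: ED_def)
    then show ?thesis using True by (simp add: ED_def)
  next
    case False
    then have t: "t = 0" using \<open>\<not> 0 < t\<close> by simp
    have L: "((\<lambda>h. ED n h / h) \<longlongrightarrow> 0) (at_left 0)"
    proof (rule Lim_transform_eventually[OF tendsto_const])
      show "\<forall>\<^sub>F x in at_left 0. 0 = ED n x / x"
        using eventually_at_left_real[of "-1" "0::real"] by (rule eventually_mono) (auto simp: ED_def)
    qed
    have "((\<lambda>h. poly (EP n) (inverse h) * (inverse h)^1 * exp (- inverse h)) \<longlongrightarrow> 0) (at_right 0)"
      using filterlim_compose[OF lim_polyexp[of "EP n" 1] filterlim_inverse_at_top_right] by simp
    then have R: "((\<lambda>h. ED n h / h) \<longlongrightarrow> 0) (at_right 0)"
    proof (rule Lim_transform_eventually)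
      show "\<forall>\<^sub>F x in at_right 0. poly (EP n) (inverse x) * (inverse x)^1 * exp (- inverse x) = ED n x / x"
        using eventually_at_right_real[of "0::real" "1"] by (rule eventually_mono) (auto simp: ED_def divide_inverse)
    qed
    have "((\<lambda>h. ED n h / h) \<longlongrightarrow> 0) (at 0)"
      using L R by (rule filterlim_split_at)
    then show ?thesis unfolding DERIV_def t by (simp add: ED_def)
  qed
qed

lemma dseq_ED: "dseq UNIV ED" unfolding dseq_def using ED_deriv by blast

lemma ED0: "ED 0 t = (if 0 < t then exp (- inverse t) else 0)" by (simp add: ED_def)

definition RD :: "nat \<Rightarrow> real \<Rightarrow> real" where
  "RD n t = (-1)^n * fact n * inverse t ^ Suc n"

lemma dseq_RD: "dseq {0<..} RD"
  unfolding dseq_def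
proof (intro allI impI)
  fix n and x :: real assume "x \<in> {0<..}"
  then have x: "x \<noteq> 0" by auto
  have "(RD n has_real_derivative (-1)^n * fact n * (of_nat (Suc n) * inverse x ^ n * (- (inverse x ^ 2)))) (at x)"
    unfolding RD_def using x
    by (auto intro!: derivative_eq_intros simp: power2_eq_square) (cases n; simp add: algebra_simps)
  moreover have "(-1)^n * fact n * (of_nat (Suc n) * inverse x ^ n * (- (inverse x ^ 2))) = RD (Suc n) x"
    by (simp add: RD_def algebra_simps power2_eq_square)
  ultimately show "(RD n has_real_derivative RD (Suc n) x) (at x)" by simp
qed

lemma RD0: "RD 0 t = inverse t" by (simp add: RD_def)


lemma seg_deriv_zero:
  fixes f :: "real^3 \<Rightarrow> real"
  assumes d: "(f has_derivative f') (at p)" and z: "\<forall>s\<in>{0..1}. f (p + s *\<^sub>R (q - p)) = 0"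
  shows "f' (q - p) = 0"
proof -
  have lin: "linear f'" using d has_derivative_linear by blast
  have "((\<lambda>s. p + s *\<^sub>R (q - p)) has_derivative (\<lambda>s. s *\<^sub>R (q - p))) (at 0)"
    by (auto intro!: derivative_eq_intros)
  from has_derivative_compose[OF this, of f f'] d
  have "((\<lambda>s. f (p + s *\<^sub>R (q - p))) has_derivative (\<lambda>s. f' (s *\<^sub>R (q - p)))) (at 0)"
    by simp
  moreover have "(\<lambda>s. f' (s *\<^sub>R (q - p))) = (*) (f' (q - p))"
    using lin by (auto simp: linear_scale)
  ultimately have "((\<lambda>s. f (p + s *\<^sub>R (q - p))) has_real_derivative f' (q - p)) (at 0)"
    by (simp add: has_field_derivative_def mult.commute)
  then have "((\<lambda>h. (f (p + h *\<^sub>R (q - p)) - f (p + 0 *\<^sub>R (q - p))) / h) \<longlongrightarrow> f' (q - p)) (at 0)"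
    unfolding DERIV_def by simp
  then have L: "((\<lambda>h. (f (p + h *\<^sub>R (q - p)) - f (p + 0 *\<^sub>R (q - p))) / h) \<longlongrightarrow> f' (q - p)) (at_right 0)"
    by (rule tendsto_mono[OF at_le, rotated]) simp
  have "\<forall>\<^sub>F h in at_right 0. (f (p + h *\<^sub>R (q - p)) - f (p + 0 *\<^sub>R (q - p))) / h = 0"
    using eventually_at_right_real[of "0::real" 1] by (rule eventually_mono) (use z[rule_format, of 0] z in auto)
  then have "((\<lambda>h. (f (p + h *\<^sub>R (q - p)) - f (p + 0 *\<^sub>R (q - p))) / h) \<longlongrightarrow> 0) (at_right 0)"
    by (rule tendsto_eventually)
  from tendsto_unique[OF _ L this] show ?thesis by simp
qed

lemma seg_region:
  assumes p: "p \<in> region" and q: "q \<in> region" and s: "0 \<le> s" "s \<le> 1"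
  shows "p + s *\<^sub>R (q - p) \<in> region"
proof -
  let ?x1 = "p$1" and ?y1 = "p$2" and ?x2 = "q$1" and ?y2 = "q$2"
  have e: "((1-s)*?x1 + s*?x2)^2 + ((1-s)*?y1 + s*?y2)^2 =
     (1-s)*(?x1^2+?y1^2) + s*(?x2^2+?y2^2) - s*(1-s)*((?x1-?x2)^2+(?y1-?y2)^2)"
    by (simp add: algebra_simps power2_eq_square)
  have "s*(1-s)*((?x1-?x2)^2+(?y1-?y2)^2) \<ge> 0" using s by simp
  moreover have "(1-s)*(?x1^2+?y1^2) \<le> (1-s)" "s*(?x2^2+?y2^2) \<le> s"
    using p q s by (auto simp: region_def intro: mult_left_le)
  ultimately have "((1-s)*?x1 + s*?x2)^2 + ((1-s)*?y1 + s*?y2)^2 \<le> 1" unfolding e by linarith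
  moreover have "(p + s *\<^sub>R (q - p))$1 = (1-s)*?x1 + s*?x2" "(p + s *\<^sub>R (q - p))$2 = (1-s)*?y1 + s*?y2"
    by (simp_all add: algebra_simps)
  ultimately show ?thesis by (simp add: region_def)
qed

lemma vanish_pd:
  fixes f :: "real^3 \<Rightarrow> real"
  assumes d: "f differentiable (at p)" and p: "p \<in> region" and z: "\<forall>q\<in>region. f q = 0"
  shows "pd i f p = 0"
proof -
  let ?f' = "frechet_derivative f (at p)"
  have D: "(f has_derivative ?f') (at p)" using d frechet_derivative_works by blast
  have lin: "linear ?f'" using D has_derivative_linear by blast
  have Z: "?f' (q - p) = 0" if "q \<in> region" for q
    using seg_deriv_zero[OF D] seg_region[OF p that] z by auto
  define c :: "real^3" where "c = axis 3 (p$3)"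
  have c: "c \<in> region" "c + (1/2) *\<^sub>R axis i 1 \<in> region"
    using exhaust_3[of i] by (auto simp: region_def c_def axis_def power2_eq_square)
  have "?f' ((c + (1/2) *\<^sub>R axis i 1) - p) - ?f' (c - p) = ?f' ((1/2) *\<^sub>R axis i 1)"
    using lin by (simp add: linear_diff[symmetric] algebra_simps)
  then have "(1/2) * ?f' (axis i 1) = 0" using Z[OF c(1)] Z[OF c(2)] lin by (simp add: linear_scale)
  then show ?thesis unfolding pd_def by simp
qed


lemma inv_props: "invertible (A::real^'n^'n) \<Longrightarrow> A ** matrix_inv A = mat 1 \<and> matrix_inv A ** A = mat 1"
  unfolding invertible_def matrix_inv_def by (rule someI_ex)

lemma posdef_invertible:
  fixes A :: "real^3^3"
  assumes "\<forall>u. u \<noteq> 0 \<longrightarrow> (\<Sum>i\<in>UNIV. \<Sum>j\<in>UNIV. A $ i $ j * u$i * u$j) > 0"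
  shows "invertible A"
proof -
  have "x = 0" if "A *v x = 0" for x
  proof (rule ccontr)
    assume "x \<noteq> 0"
    then have "(\<Sum>i\<in>UNIV. \<Sum>j\<in>UNIV. A $ i $ j * x$i * x$j) > 0" using assms by blast
    moreover have "(\<Sum>i\<in>UNIV. \<Sum>j\<in>UNIV. A $ i $ j * x$i * x$j) = (\<Sum>i\<in>UNIV. x$i * (A *v x)$i)"
      by (simp add: matrix_vector_mult_def sum_distrib_left algebra_simps)
    ultimately show False using that by simp
  qed
  then show ?thesis using matrix_left_invertible_ker invertible_left_inverse by blast
qed

definition Kc :: "(real^3 \<Rightarrow> real^3^3) \<Rightarrow> (real^3 \<Rightarrow> real^3) \<Rightarrow> 3 \<Rightarrow> 3 \<Rightarrow> real^3 \<Rightarrow> real" where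
  "Kc g w i j p = (\<Sum>l\<in>UNIV. w p $ l * (pd i (\<lambda>q. g q $ j $ l) p + pd j (\<lambda>q. g q $ i $ l) p - pd l (\<lambda>q. g q $ i $ j) p))"

lemma wnabla:
  assumes winv: "\<And>l. (\<Sum>k\<in>UNIV. w p $ k * matrix_inv (g p) $ k $ l) = w p $ l"
  shows "w p \<bullet> lc_nabla g S T p = (\<Sum>k\<in>UNIV. w p $ k * (\<Sum>i\<in>UNIV. S p $ i * pd i (\<lambda>q. T q $ k) p))
     + (1/2) * (\<Sum>i\<in>UNIV. \<Sum>j\<in>UNIV. S p $ i * T p $ j * Kc g w i j p)"
proof -
  let ?G = "\<lambda>i j l. pd i (\<lambda>q. g q $ j $ l) p + pd j (\<lambda>q. g q $ i $ l) p - pd l (\<lambda>q. g q $ i $ j) p"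
  have "(\<Sum>k\<in>UNIV. w p $ k * (\<Sum>i\<in>UNIV. \<Sum>j\<in>UNIV. christoffel g k i j p * S p $ i * T p $ j))
      = (\<Sum>i\<in>UNIV. \<Sum>j\<in>UNIV. S p $ i * T p $ j * (\<Sum>k\<in>UNIV. w p $ k * christoffel g k i j p))"
    by (simp add: sum_3 algebra_simps)
  also have "\<dots> = (\<Sum>i\<in>UNIV. \<Sum>j\<in>UNIV. S p $ i * T p $ j * ((1/2) * Kc g w i j p))"
  proof -
    have "(\<Sum>k\<in>UNIV. w p $ k * christoffel g k i j p) = (1/2) * Kc g w i j p" for i j
    proof -
      have "(\<Sum>k\<in>UNIV. w p $ k * christoffel g k i j p)
          = (1/2) * (\<Sum>k\<in>UNIV. \<Sum>l\<in>UNIV. w p $ k * matrix_inv (g p) $ k $ l * ?G i j l)"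
        unfolding christoffel_def by (simp add: sum_3 algebra_simps)
      also have "\<dots> = (1/2) * (\<Sum>l\<in>UNIV. (\<Sum>k\<in>UNIV. w p $ k * matrix_inv (g p) $ k $ l) * ?G i j l)"
        by (simp add: sum_3 algebra_simps)
      also have "\<dots> = (1/2) * Kc g w i j p" unfolding winv Kc_def by simp
      finally show ?thesis .
    qed
    then show ?thesis by (intro sum.cong refl) simp
  qed
  finally have "(\<Sum>k\<in>UNIV. w p $ k * (\<Sum>i\<in>UNIV. \<Sum>j\<in>UNIV. christoffel g k i j p * S p $ i * T p $ j))
      = (1/2) * (\<Sum>i\<in>UNIV. \<Sum>j\<in>UNIV. S p $ i * T p $ j * Kc g w i j p)"
    by (simp add: sum_3 algebra_simps)
  then show ?thesis
    unfolding lc_nabla_def inner_vec_def by (simp add: distrib_left sum.distrib)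
qed

lemma sff_generic:
  assumes gw: "g p *v w p = w p" and symq: "\<forall>q i j. g q $ i $ j = g q $ j $ i"
    and inv: "invertible (g p)" and wne: "w p \<noteq> 0"
    and NS: "(\<Sum>k\<in>UNIV. \<Sum>i\<in>UNIV. S p $ i * (pd i (\<lambda>q. w q $ k) p * T p $ k + w p $ k * pd i (\<lambda>q. T q $ k) p)) = 0"
    and NT: "(\<Sum>k\<in>UNIV. \<Sum>i\<in>UNIV. T p $ i * (pd i (\<lambda>q. w q $ k) p * S p $ k + w p $ k * pd i (\<lambda>q. S q $ k) p)) = 0"
  shows "sff g w S T p = (1 / (2 * norm (w p))) *
     (- (\<Sum>i\<in>UNIV. \<Sum>k\<in>UNIV. (S p $ i * T p $ k + T p $ i * S p $ k) * pd i (\<lambda>q. w q $ k) p)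
      + (\<Sum>i\<in>UNIV. \<Sum>j\<in>UNIV. S p $ i * T p $ j * Kc g w i j p))"
proof -
  have sym: "\<forall>i j. g p $ i $ j = g p $ j $ i" using symq by blast
  have symf: "(\<lambda>q. g q $ i $ j) = (\<lambda>q. g q $ j $ i)" for i j using symq by auto
  have ip: "g p ** matrix_inv (g p) = mat 1" "matrix_inv (g p) ** g p = mat 1" using inv_props[OF inv] by auto
  have wg: "w p v* g p = w p"
  proof -
    have "w p v* g p = g p *v w p"
      by (simp add: vector_matrix_mult_def matrix_vector_mult_def sym mult.commute)
    then show ?thesis using gw by simp
  qed
  have "w p v* matrix_inv (g p) = w p"
    by (metis wg ip(1) vector_matrix_mul_assoc vector_matrix_mul_rid)
  then have winv: "(\<Sum>k\<in>UNIV. w p $ k * matrix_inv (g p) $ k $ l) = w p $ l" for l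
    by (metis (no_types) vec_lambda_beta vector_matrix_mult_def)
  have ginvw: "matrix_inv (g p) *v w p = w p"
    by (metis gw ip(2) matrix_vector_mul_assoc matrix_vector_mul_lid)
  have gi: "ginner g p X (c *\<^sub>R w p) = c * (X \<bullet> w p)" for X c
  proof -
    have "ginner g p X (c *\<^sub>R w p) = c * (\<Sum>i\<in>UNIV. X $ i * (g p *v w p) $ i)"
      unfolding ginner_def matrix_vector_mult_def
      by (simp add: sum_3 algebra_simps)
    then show ?thesis using gw by (simp add: inner_vec_def)
  qed
  have ww: "ginner g p (w p) (w p) = w p \<bullet> w p"
    using gi[of "w p" 1] by simp
  have un: "unit_normal g w p = (1 / norm (w p)) *\<^sub>R w p"
    unfolding unit_normal_def Let_def ginvw ww by (simp add: norm_eq_sqrt_inner)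
  have ST: "w p \<bullet> lc_nabla g S T p = - (\<Sum>i\<in>UNIV. \<Sum>k\<in>UNIV. S p $ i * T p $ k * pd i (\<lambda>q. w q $ k) p)
     + (1/2) * (\<Sum>i\<in>UNIV. \<Sum>j\<in>UNIV. S p $ i * T p $ j * Kc g w i j p)"
  proof -
    have "(\<Sum>k\<in>UNIV. \<Sum>i\<in>UNIV. S p $ i * (pd i (\<lambda>q. w q $ k) p * T p $ k + w p $ k * pd i (\<lambda>q. T q $ k) p))
       = (\<Sum>k\<in>UNIV. w p $ k * (\<Sum>i\<in>UNIV. S p $ i * pd i (\<lambda>q. T q $ k) p))
       + (\<Sum>i\<in>UNIV. \<Sum>k\<in>UNIV. S p $ i * T p $ k * pd i (\<lambda>q. w q $ k) p)"
      by (simp add: sum_3 algebra_simps)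
    then have "(\<Sum>k\<in>UNIV. w p $ k * (\<Sum>i\<in>UNIV. S p $ i * pd i (\<lambda>q. T q $ k) p))
       = - (\<Sum>i\<in>UNIV. \<Sum>k\<in>UNIV. S p $ i * T p $ k * pd i (\<lambda>q. w q $ k) p)"
      using NS by linarith
    then show ?thesis using wnabla[of w p g S T, OF winv] by simp
  qed
  have TS: "w p \<bullet> lc_nabla g T S p = - (\<Sum>i\<in>UNIV. \<Sum>k\<in>UNIV. T p $ i * S p $ k * pd i (\<lambda>q. w q $ k) p)
     + (1/2) * (\<Sum>i\<in>UNIV. \<Sum>j\<in>UNIV. T p $ i * S p $ j * Kc g w i j p)"
  proof -
    have "(\<Sum>k\<in>UNIV. \<Sum>i\<in>UNIV. T p $ i * (pd i (\<lambda>q. w q $ k) p * S p $ k + w p $ k * pd i (\<lambda>q. S q $ k) p))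
       = (\<Sum>k\<in>UNIV. w p $ k * (\<Sum>i\<in>UNIV. T p $ i * pd i (\<lambda>q. S q $ k) p))
       + (\<Sum>i\<in>UNIV. \<Sum>k\<in>UNIV. T p $ i * S p $ k * pd i (\<lambda>q. w q $ k) p)"
      by (simp add: sum_3 algebra_simps)
    then have "(\<Sum>k\<in>UNIV. w p $ k * (\<Sum>i\<in>UNIV. T p $ i * pd i (\<lambda>q. S q $ k) p))
       = - (\<Sum>i\<in>UNIV. \<Sum>k\<in>UNIV. T p $ i * S p $ k * pd i (\<lambda>q. w q $ k) p)"
      using NT by linarith
    then show ?thesis using wnabla[of w p g T S, OF winv] by simp
  qed
  have Ksym: "Kc g w i j p = Kc g w j i p" for i j
    unfolding Kc_def using symf[of i j] by (simp add: sum_3 algebra_simps)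
  have "(\<Sum>i\<in>UNIV. \<Sum>j\<in>UNIV. T p $ i * S p $ j * Kc g w i j p) = (\<Sum>i\<in>UNIV. \<Sum>j\<in>UNIV. S p $ i * T p $ j * Kc g w i j p)"
    by (simp add: sum_3 Ksym algebra_simps)
  moreover have "(\<Sum>i\<in>UNIV. \<Sum>k\<in>UNIV. (S p $ i * T p $ k + T p $ i * S p $ k) * pd i (\<lambda>q. w q $ k) p)
     = (\<Sum>i\<in>UNIV. \<Sum>k\<in>UNIV. S p $ i * T p $ k * pd i (\<lambda>q. w q $ k) p)
     + (\<Sum>i\<in>UNIV. \<Sum>k\<in>UNIV. T p $ i * S p $ k * pd i (\<lambda>q. w q $ k) p)"
    by (simp add: sum.distrib distrib_right)
  moreover have "sff g w S T p = (1/(2*norm(w p))) * (w p \<bullet> lc_nabla g S T p + w p \<bullet> lc_nabla g T S p)"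
    unfolding sff_def un gi by (simp add: inner_add_right inner_commute)
  ultimately show ?thesis unfolding ST TS by (simp add: algebra_simps)
qed


lemma pd_dot:
  assumes "smooth_vf w" "smooth_vf T"
  shows "pd i (\<lambda>q. w q \<bullet> T q) p = (\<Sum>k\<in>UNIV. pd i (\<lambda>q. w q $ k) p * T p $ k + w p $ k * pd i (\<lambda>q. T q $ k) p)"
proof -
  have d: "(\<lambda>q. w q $ k) differentiable (at p)" "(\<lambda>q. T q $ k) differentiable (at p)" for k
    using assms smooth_differentiable unfolding smooth_vf_def by blast+
  have dm: "(\<lambda>q. w q $ k * T q $ k) differentiable (at p)" for k
    using d by (intro differentiable_mult) auto
  have "(\<lambda>q. w q \<bullet> T q) = (\<lambda>q. w q $ 1 * T q $ 1 + (w q $ 2 * T q $ 2 + w q $ 3 * T q $ 3))"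
    by (simp add: inner_vec_def sum_3 add.assoc)
  then show ?thesis
    using d dm by (simp add: sum_3 pd_add pd_mult differentiable_add)
qed

lemma tang_N:
  assumes w: "smooth_vf w" and T: "smooth_vf T" and z: "\<forall>q\<in>region. w q \<bullet> T q = 0" and p: "p \<in> region"
  shows "(\<Sum>k\<in>UNIV. \<Sum>i\<in>UNIV. S p $ i * (pd i (\<lambda>q. w q $ k) p * T p $ k + w p $ k * pd i (\<lambda>q. T q $ k) p)) = 0"
proof -
  have d: "(\<lambda>q. w q $ k) differentiable (at p)" "(\<lambda>q. T q $ k) differentiable (at p)" for k
    using assms smooth_differentiable unfolding smooth_vf_def by blast+
  have "(\<lambda>q. w q \<bullet> T q) = (\<lambda>q. w q $ 1 * T q $ 1 + (w q $ 2 * T q $ 2 + w q $ 3 * T q $ 3))"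
    by (simp add: inner_vec_def sum_3 add.assoc)
  then have dd: "(\<lambda>q. w q \<bullet> T q) differentiable (at p)"
    using d by (simp add: differentiable_add differentiable_mult)
  have "pd i (\<lambda>q. w q \<bullet> T q) p = 0" for i
    using vanish_pd[OF dd p] z by blast
  then have "(\<Sum>k\<in>UNIV. pd i (\<lambda>q. w q $ k) p * T p $ k + w p $ k * pd i (\<lambda>q. T q $ k) p) = 0" for i
    using pd_dot[OF w T] by simp
  then have "(\<Sum>i\<in>UNIV. S p $ i * (\<Sum>k\<in>UNIV. pd i (\<lambda>q. w q $ k) p * T p $ k + w p $ k * pd i (\<lambda>q. T q $ k) p)) = 0"
    by simp
  then show ?thesis by (simp add: sum_3 algebra_simps)
qed


abbreviation Ef :: "real \<Rightarrow> real" where "Ef \<equiv> ED 0"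

lemma Ef_simp: "Ef t = (if 0 < t then exp (- inverse t) else 0)" by (simp add: ED_def)
lemma Ef_nonneg: "Ef t \<ge> 0" by (simp add: Ef_simp)
lemma Ef_pos: "0 < t \<Longrightarrow> Ef t > 0" by (simp add: Ef_simp)
lemma Ef_zero: "t \<le> 0 \<Longrightarrow> Ef t = 0" by (simp add: Ef_simp)

lemma Ef_chain: "(f has_real_derivative f') (at x) \<Longrightarrow> ((\<lambda>x. Ef (f x)) has_real_derivative ED 1 (f x) * f') (at x)"
  using DERIV_chain2[OF ED_deriv[of 0]] by simp

definition Af :: "real \<Rightarrow> real" where
  "Af s = Ef ((s - 4/25) * (25/6)) * inverse (Ef ((s - 4/25) * (25/6)) + Ef (1 - (s - 4/25) * (25/6)))"

definition Sg :: "real \<Rightarrow> real" where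
  "Sg s = (1 - s) * inverse (s * s + Ef (3/20 - s))"

lemma den_pos: "Ef t + Ef (1 - t) > 0"
  using Ef_pos[of t] Ef_pos[of "1 - t"] Ef_nonneg[of t] Ef_nonneg[of "1-t"]
  by (cases "0 < t") auto

lemma den2_pos: "s * s + Ef (3/20 - s) > 0"
proof (cases "s = 0")
  case True then show ?thesis using Ef_pos[of "3/20"] by simp
next
  case False then have "s * s > 0" by (metis not_real_square_gt_zero)
  then show ?thesis using Ef_nonneg[of "3/20 - s"] by linarith
qed

lemma Af_low: "s \<le> 4/25 \<Longrightarrow> Af s = 0"
  unfolding Af_def by (simp add: Ef_zero)

lemma Af_high: "s \<ge> 2/5 \<Longrightarrow> Af s = 1"
proof -
  assume s: "s \<ge> 2/5"
  then have "1 - (s - 4/25) * (25/6) \<le> 0" by simp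
  moreover have "(s - 4/25) * (25/6) > 0" using s by simp
  ultimately show ?thesis unfolding Af_def using Ef_zero Ef_pos
    by (metis add.right_neutral less_irrefl right_inverse)
qed

lemma u': "((\<lambda>s::real. (s - 4/25) * (25/6)) has_real_derivative 25/6) (at x)"
  by (rule DERIV_cong[OF DERIV_cmult_right[OF DERIV_diff[OF DERIV_ident DERIV_const]]]) simp
lemma Af_ex: "\<exists>D. (Af has_real_derivative D) (at x)"
proof -
  let ?u = "\<lambda>s::real. (s - 4/25) * (25/6)"
  have ne: "Ef (?u x) + Ef (1 - ?u x) \<noteq> 0" using den_pos[of "?u x"] by simp
  have d1: "((\<lambda>s. 1 - ?u s) has_real_derivative 0 - 25/6) (at x)"
    by (rule DERIV_diff[OF DERIV_const u'])
  show ?thesis unfolding Af_def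
    using DERIV_mult[OF Ef_chain[OF u'] DERIV_inverse_fun[OF DERIV_add[OF Ef_chain[OF u'] Ef_chain[OF d1]] ne]]
    by blast
qed
lemma Sg_ex: "\<exists>D. (Sg has_real_derivative D) (at x)"
proof -
  have ne: "x * x + Ef (3/20 - x) \<noteq> 0" using den2_pos[of x] by simp
  have d1: "((\<lambda>s. 3/20 - s) has_real_derivative 0 - 1) (at x)"
    by (rule DERIV_diff[OF DERIV_const DERIV_ident])
  show ?thesis unfolding Sg_def
    using DERIV_mult[OF DERIV_diff[OF DERIV_const DERIV_ident] DERIV_inverse_fun[OF DERIV_add[OF DERIV_mult[OF DERIV_ident DERIV_ident] Ef_chain[OF d1]] ne]]
    by blast
qed
lemma Af_deriv: "(Af has_real_derivative deriv Af x) (at x)"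
proof -
  have "\<exists>D. (Af has_real_derivative D) (at x)" by (rule Af_ex)
  then show ?thesis using DERIV_deriv_iff_real_differentiable real_differentiable_def by blast
qed

lemma Sg_deriv: "(Sg has_real_derivative deriv Sg x) (at x)"
proof -
  have "\<exists>D. (Sg has_real_derivative D) (at x)" by (rule Sg_ex)
  then show ?thesis using DERIV_deriv_iff_real_differentiable real_differentiable_def by blast
qed

lemma Af_deriv_low: "x < 4/25 \<Longrightarrow> deriv Af x = 0"
proof -
  assume x: "x < 4/25"
  have "(Af has_real_derivative 0) (at x)"
    by (rule has_field_derivative_transform_within_open[of "\<lambda>_. 0" _ _ "{..<4/25}"])
       (use x Af_low in auto)
  then show ?thesis by (rule DERIV_imp_deriv)
qed

lemma Af_deriv_high: "x > 2/5 \<Longrightarrow> deriv Af x = 0"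
proof -
  assume x: "x > 2/5"
  have "(Af has_real_derivative 0) (at x)"
    by (rule has_field_derivative_transform_within_open[of "\<lambda>_. 1" _ _ "{2/5<..}"])
       (use x Af_high in auto)
  then show ?thesis by (rule DERIV_imp_deriv)
qed

lemma Sg_high: "s \<ge> 3/20 \<Longrightarrow> Sg s = (1 - s) / (s * s)"
proof -
  assume s: "s \<ge> 3/20"
  have "Ef (3/20 - s) = 0" using s by (intro Ef_zero) simp
  then show ?thesis unfolding Sg_def divide_inverse by simp
qed

lemma Sg_deriv_high: "x > 3/20 \<Longrightarrow> deriv Sg x = (x - 2) / (x^3)"
proof -
  assume x: "x > 3/20"
  have x0: "x \<noteq> 0" using x by simp
  have "((\<lambda>s. (1 - s) / (s * s)) has_real_derivative (x - 2) / (x^3)) (at x)"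
    apply (rule DERIV_cong[OF DERIV_divide[OF DERIV_diff[OF DERIV_const DERIV_ident] DERIV_mult[OF DERIV_ident DERIV_ident]]])
    using x0 apply simp
    using x0 apply (simp add: divide_simps power3_eq_cube)
    apply (simp add: algebra_simps)
    done
  then have "(Sg has_real_derivative (x - 2) / (x^3)) (at x)"
    by (rule has_field_derivative_transform_within_open[of _ _ _ "{3/20<..}"]) (use x Sg_high in auto)
  then show ?thesis by (rule DERIV_imp_deriv)
qed


definition sq :: "real^3 \<Rightarrow> real" where "sq p = p$1 * p$1 + p$2 * p$2"
definition aa :: "real^3 \<Rightarrow> real" where "aa p = Af (sq p)"
definition sg :: "real^3 \<Rightarrow> real" where "sg p = Sg (sq p)"
definition ww :: "real^3 \<Rightarrow> real^3" where "ww p = vector [aa p * p$1, aa p * p$2, 1 - aa p]"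
definition Jv :: "real^3 \<Rightarrow> real^3" where "Jv p = vector [- p$2, p$1, 0]"
definition gg :: "real^3 \<Rightarrow> real^3^3" where
  "gg p = (\<chi> i j. (if i = j then 1 else 0) + sg p * Jv p $ i * Jv p $ j)"

lemma smooth_minus: "smooth_fun f \<Longrightarrow> smooth_fun (\<lambda>q. - f q)"
  using smooth_mult[OF smooth_const, of f "-1"] by simp

lemma smooth_sq: "smooth_fun sq"
  unfolding sq_def by (intro smooth_add smooth_mult smooth_coord)

lemma smooth_aa: "smooth_fun aa"
proof -
  let ?u = "\<lambda>p. (sq p - 4/25) * (25/6)"
  have su: "smooth_fun ?u" by (intro smooth_mult smooth_diff smooth_sq smooth_const)
  have e1: "smooth_fun (\<lambda>p. ED 0 (?u p))" by (rule smooth_comp[OF dseq_ED _ su]) simp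
  have e2: "smooth_fun (\<lambda>p. ED 0 (1 - ?u p))"
    by (rule smooth_comp[OF dseq_ED _ smooth_diff[OF smooth_const su]]) simp
  have e3: "smooth_fun (\<lambda>p. RD 0 (ED 0 (?u p) + ED 0 (1 - ?u p)))"
    by (rule smooth_comp[OF dseq_RD _ smooth_add[OF e1 e2]]) (use den_pos in auto)
  have "aa = (\<lambda>p. ED 0 (?u p) * RD 0 (ED 0 (?u p) + ED 0 (1 - ?u p)))"
    by (auto simp: aa_def Af_def RD0)
  then show ?thesis using smooth_mult[OF e1 e3] by simp
qed

lemma smooth_sg: "smooth_fun sg"
proof -
  have e1: "smooth_fun (\<lambda>p. ED 0 (3/20 - sq p))"
    by (rule smooth_comp[OF dseq_ED]) (auto intro: smooth_diff smooth_const smooth_sq)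
  have e3: "smooth_fun (\<lambda>p. RD 0 (sq p * sq p + ED 0 (3/20 - sq p)))"
    by (rule smooth_comp[OF dseq_RD _ smooth_add[OF smooth_mult[OF smooth_sq smooth_sq] e1]]) (use den2_pos in auto)
  have "sg = (\<lambda>p. (1 - sq p) * RD 0 (sq p * sq p + ED 0 (3/20 - sq p)))"
    by (auto simp: sg_def Sg_def RD0)
  then show ?thesis using smooth_mult[OF smooth_diff[OF smooth_const[of 1] smooth_sq] e3] by simp
qed

lemma pd_minus: "f differentiable (at p) \<Longrightarrow> pd i (\<lambda>q. - f q) p = - pd i f p"
  using pd_mult[of "\<lambda>q. -1" p f i] by (simp add: pd_const)

lemma pd_diff: "f differentiable (at p) \<Longrightarrow> g differentiable (at p) \<Longrightarrow>
   pd i (\<lambda>q. f q - g q) p = pd i f p - pd i g p"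
  using pd_add[of f p "\<lambda>q. - g q" i] pd_minus[of g p i] differentiable_minus[of g]
  by simp

lemmas smooth_rules = smooth_const smooth_coord smooth_add smooth_mult smooth_diff smooth_minus
  smooth_sq smooth_aa smooth_sg

lemma diffrule: "smooth_fun f \<Longrightarrow> f differentiable (at p)" by (rule smooth_differentiable)

lemmas pd_rules = pd_add pd_mult pd_diff pd_minus pd_const pd_coord

lemma pd_sq: "pd i sq p = 2 * p$1 * pd i (\<lambda>q. q$1) p + 2 * p$2 * pd i (\<lambda>q. q$2) p"
proof -
  have "pd i sq p = pd i (\<lambda>q. q$1 * q$1 + q$2 * q$2) p" by (simp add: sq_def[abs_def])
  also have "\<dots> = 2 * p$1 * pd i (\<lambda>q. q$1) p + 2 * p$2 * pd i (\<lambda>q. q$2) p"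
    by (simp add: pd_add pd_mult smooth_rules diffrule algebra_simps del: pd_coord)
  finally show ?thesis .
qed

lemma pd_aa: "pd i aa p = deriv Af (sq p) * pd i sq p"
  using pd_comp[OF Af_deriv diffrule[OF smooth_sq]] by (simp add: aa_def[abs_def])

lemma pd_sg: "pd i sg p = deriv Sg (sq p) * pd i sq p"
  using pd_comp[OF Sg_deriv diffrule[OF smooth_sq]] by (simp add: sg_def[abs_def])

lemma "pd 1 (\<lambda>q. ww q $ 1) p = aa p + deriv Af (sq p) * (2 * p$1) * p$1"
  by (simp add: ww_def pd_rules pd_aa pd_sq smooth_rules diffrule)

lemma Kc_val: "Kc gg ww i j p = -2 * aa p * (2 * sg p + deriv Sg (sq p) * sq p) * Jv p $ i * Jv p $ j"
  using exhaust_3[of i] exhaust_3[of j]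
  by (elim disjE; simp add: Kc_def sum_3 gg_def Jv_def ww_def pd_rules pd_aa pd_sg pd_sq smooth_rules diffrule;
      simp add: sq_def algebra_simps)

definition Qf :: "real^3 \<Rightarrow> real^3 \<Rightarrow> real^3 \<Rightarrow> real" where
  "Qf p u v = aa p * (u$1 * v$1 + u$2 * v$2)
     + 2 * deriv Af (sq p) * (p$1 * u$1 + p$2 * u$2) * (p$1 * v$1 + p$2 * v$2)
     - deriv Af (sq p) * ((p$1 * u$1 + p$2 * u$2) * v$3 + (p$1 * v$1 + p$2 * v$2) * u$3)
     + aa p * (2 * sg p + deriv Sg (sq p) * sq p) * (- p$2 * u$1 + p$1 * u$2) * (- p$2 * v$1 + p$1 * v$2)"

lemma W_val:
  "- (\<Sum>i\<in>UNIV. \<Sum>k\<in>UNIV. (u $ i * v $ k + v $ i * u $ k) * pd i (\<lambda>q. ww q $ k) p)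
      + (\<Sum>i\<in>UNIV. \<Sum>j\<in>UNIV. u $ i * v $ j * Kc gg ww i j p) = -2 * Qf p u v"
  apply (simp add: Kc_val sum_3 Jv_def ww_def pd_rules pd_aa pd_sq smooth_rules diffrule Qf_def)
  apply (simp add: sq_def algebra_simps)
  done


lemma Q_low: "sq p < 4/25 \<Longrightarrow> Qf p u v = 0"
  using Af_low[of "sq p"] Af_deriv_low[of "sq p"] by (simp add: Qf_def aa_def)

lemma sq_nonneg: "sq p \<ge> 0" by (simp add: sq_def)

lemma ww_dot: "ww p \<bullet> u = aa p * (p$1 * u$1 + p$2 * u$2) + (1 - aa p) * u$3"
  by (simp add: ww_def inner_vec_def sum_3 algebra_simps)

lemma Q_high:
  assumes s: "sq p > 3/20"
  shows "sq p * Qf p u v = (aa p + 2 * deriv Af (sq p) * sq p) * (p$1 * u$1 + p$2 * u$2) * (p$1 * v$1 + p$2 * v$2)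
     - sq p * deriv Af (sq p) * ((p$1 * u$1 + p$2 * u$2) * v$3 + (p$1 * v$1 + p$2 * v$2) * u$3)"
proof -
  let ?s = "sq p"
  have s0: "?s \<noteq> 0" using s by simp
  have m: "?s * (2 * sg p + deriv Sg ?s * ?s) = -1"
    using s s0 unfolding sg_def Sg_high[OF less_imp_le[OF s]] Sg_deriv_high[OF s]
    by (simp add: field_simps power3_eq_cube)
  define m' where "m' = 2 * sg p + deriv Sg ?s * ?s"
  have m2: "?s * m' = -1" using m m'_def by simp
  have L: "?s * (u$1 * v$1 + u$2 * v$2) = (p$1 * u$1 + p$2 * u$2) * (p$1 * v$1 + p$2 * v$2) + (- p$2 * u$1 + p$1 * u$2) * (- p$2 * v$1 + p$1 * v$2)"
    by (simp add: sq_def algebra_simps)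
  have "?s * Qf p u v = aa p * (?s * (u$1 * v$1 + u$2 * v$2))
     + 2 * deriv Af ?s * ?s * (p$1 * u$1 + p$2 * u$2) * (p$1 * v$1 + p$2 * v$2)
     - ?s * deriv Af ?s * ((p$1 * u$1 + p$2 * u$2) * v$3 + (p$1 * v$1 + p$2 * v$2) * u$3)
     + aa p * (?s * m') * (- p$2 * u$1 + p$1 * u$2) * (- p$2 * v$1 + p$1 * v$2)"
    unfolding Qf_def m'_def by (simp add: algebra_simps)
  also have "\<dots> = (aa p + 2 * deriv Af (sq p) * sq p) * (p$1 * u$1 + p$2 * u$2) * (p$1 * v$1 + p$2 * v$2)
     - sq p * deriv Af (sq p) * ((p$1 * u$1 + p$2 * u$2) * v$3 + (p$1 * v$1 + p$2 * v$2) * u$3)"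
    unfolding m2 L by (simp add: algebra_simps)
  finally show ?thesis .
qed

lemma det_alg:
  fixes a c d p1 t1 p2 t2 s :: real
  assumes s0: "s \<noteq> 0"
    and Q11: "s * Q11 = c * p1 * p1 - d * (p1 * t1 + p1 * t1)"
    and Q22: "s * Q22 = c * p2 * p2 - d * (p2 * t2 + p2 * t2)"
    and Q12: "s * Q12 = c * p1 * p2 - d * (p1 * t2 + p2 * t1)"
    and Q21: "s * Q21 = c * p2 * p1 - d * (p2 * t1 + p1 * t2)"
    and k1: "a * p1 + (1 - a) * t1 = 0" and k2: "a * p2 + (1 - a) * t2 = 0"
  shows "Q11 * Q22 - Q12 * Q21 = 0"
proof -
  have e1: "a * p1 = - ((1 - a) * t1)" and e2: "a * p2 = - ((1 - a) * t2)" using k1 k2 by linarith+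
  have f1: "(1 - a) * t1 = - (a * p1)" and f2: "(1 - a) * t2 = - (a * p2)" using k1 k2 by linarith+
  have X: "p1 * t2 - t1 * p2 = 0"
  proof -
    have "a * (p1 * t2 - t1 * p2) = (a * p1) * t2 - t1 * (a * p2)" by (simp add: algebra_simps)
    also have "\<dots> = 0" unfolding e1 e2 by (simp add: algebra_simps)
    finally have A: "a * (p1 * t2 - t1 * p2) = 0" .
    have "(1 - a) * (p1 * t2 - t1 * p2) = p1 * ((1 - a) * t2) - ((1 - a) * t1) * p2" by (simp add: algebra_simps)
    also have "\<dots> = 0" unfolding f1 f2 by (simp add: algebra_simps)
    finally have B: "(1 - a) * (p1 * t2 - t1 * p2) = 0" .
    have "p1 * t2 - t1 * p2 = a * (p1 * t2 - t1 * p2) + (1 - a) * (p1 * t2 - t1 * p2)" by (simp add: algebra_simps)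
    then show ?thesis using A B by simp
  qed
  have "(s * Q11) * (s * Q22) - (s * Q12) * (s * Q21)
     = - (d * d) * ((p1 * t2 - t1 * p2) * (p1 * t2 - t1 * p2))"
    unfolding Q11 Q22 Q12 Q21 by (simp add: algebra_simps)
  also have "\<dots> = 0" using X by simp
  finally have E: "(s * Q11) * (s * Q22) - (s * Q12) * (s * Q21) = 0" .
  have "s * s * (Q11 * Q22 - Q12 * Q21) =
     (s * Q11) * (s * Q22) - (s * Q12) * (s * Q21)"
    by (simp add: algebra_simps)
  then have "s * s * (Q11 * Q22 - Q12 * Q21) = 0"
    using E by simp
  then show ?thesis using s0 by simp
qed

lemma Qdet:
  assumes s: "sq p > 3/20" and ku: "ww p \<bullet> u = 0" and kv: "ww p \<bullet> v = 0"
  shows "Qf p u u * Qf p v v - Qf p u v * Qf p v u = 0"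
proof -
  show ?thesis
    apply (rule det_alg[of "sq p" _ "aa p + 2 * deriv Af (sq p) * sq p" "p$1 * u$1 + p$2 * u$2" "sq p * deriv Af (sq p)" "u$3"
          _ "p$1 * v$1 + p$2 * v$2" "v$3" _ _ "aa p"])
    using s ku kv by (simp_all add: Q_high[OF s] ww_dot algebra_simps)
qed

lemma Q_outer:
  assumes s: "sq p \<ge> 4/9" and ku: "ww p \<bullet> u = 0"
  shows "Qf p u v = 0"
proof -
  have s': "sq p > 3/20" "sq p > 2/5" using s by simp_all
  have a: "aa p = 1" "deriv Af (sq p) = 0" using Af_high[of "sq p"] Af_deriv_high[OF s'(2)] s' by (simp_all add: aa_def)
  have "p$1 * u$1 + p$2 * u$2 = 0" using ku by (simp add: ww_dot a)
  then have "sq p * Qf p u v = 0" using Q_high[OF s'(1), of u v] a by simp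
  then show ?thesis using s' by simp
qed


lemma gw: "gg p *v ww p = ww p"
proof -
  have "(gg p *v ww p) $ i = ww p $ i" for i
    using exhaust_3[of i]
    by (elim disjE; simp add: matrix_vector_mult_def gg_def Jv_def ww_def sum_3 algebra_simps)
  then show ?thesis by (simp add: vec_eq_iff)
qed

lemma symq: "\<forall>q i j. gg q $ i $ j = gg q $ j $ i"
  by (simp add: gg_def)

lemma Sg_nonneg: "0 \<le> s \<Longrightarrow> s \<le> 1 \<Longrightarrow> Sg s \<ge> 0"
  unfolding Sg_def using den2_pos[of s] by simp

lemma quad_gg: "(\<Sum>i\<in>UNIV. \<Sum>j\<in>UNIV. gg p $ i $ j * u$i * u$j) =
   u$1 * u$1 + u$2 * u$2 + u$3 * u$3 + sg p * ((- p$2 * u$1 + p$1 * u$2) * (- p$2 * u$1 + p$1 * u$2))"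
  by (simp add: gg_def Jv_def sum_3 algebra_simps)

lemma posdef:
  assumes p: "p \<in> region" and u: "u \<noteq> 0"
  shows "(\<Sum>i\<in>UNIV. \<Sum>j\<in>UNIV. gg p $ i $ j * u$i * u$j) > 0"
proof -
  have "sq p \<le> 1" using p by (simp add: region_def sq_def power2_eq_square)
  then have sg: "sg p \<ge> 0" using Sg_nonneg[of "sq p"] sq_nonneg[of p] by (simp add: sg_def)
  have "u$1 \<noteq> 0 \<or> u$2 \<noteq> 0 \<or> u$3 \<noteq> 0"
    using u exhaust_3 by (metis vec_eq_iff zero_index)
  then have "0 < u$1 * u$1 \<or> 0 < u$2 * u$2 \<or> 0 < u$3 * u$3"
    using not_real_square_gt_zero by blast
  moreover have "0 \<le> u$1 * u$1" "0 \<le> u$2 * u$2" "0 \<le> u$3 * u$3" by simp_all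
  ultimately have "u$1 * u$1 + u$2 * u$2 + u$3 * u$3 > 0" by linarith
  moreover have "sg p * ((- p$2 * u$1 + p$1 * u$2) * (- p$2 * u$1 + p$1 * u$2)) \<ge> 0"
    using sg by simp
  ultimately show ?thesis unfolding quad_gg by linarith
qed

lemma smooth_gg: "smooth_fun (\<lambda>p. gg p $ i $ j)"
  using exhaust_3[of i] exhaust_3[of j]
  by (elim disjE; simp add: gg_def Jv_def smooth_rules)

lemma smooth_ww: "smooth_vf ww"
  unfolding smooth_vf_def
proof
  fix i :: 3 show "smooth_fun (\<lambda>p. ww p $ i)"
    using exhaust_3[of i] by (elim disjE; simp add: ww_def smooth_rules)
qed

lemma axis3: "(axis 3 c :: real^3) $ 1 = 0" "(axis 3 c :: real^3) $ 2 = 0"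
  by (simp_all add: axis_def)

lemma per_gg: "t_periodic gg"
  unfolding t_periodic_def by (simp add: gg_def Jv_def sg_def sq_def axis3)

lemma per_ww: "t_periodic ww"
  unfolding t_periodic_def by (simp add: ww_def aa_def sq_def axis3)

lemma riem_gg: "riem_metric gg"
  unfolding riem_metric_def using smooth_gg per_gg symq posdef by blast

lemma ww_ne: "ww p \<noteq> 0"
proof (cases "aa p = 1")
  case True
  then have "sq p > 4/25" using Af_low[of "sq p"] by (force simp: aa_def)
  then have "p$1 \<noteq> 0 \<or> p$2 \<noteq> 0" by (auto simp: sq_def)
  moreover have "ww p $ 1 = p $ 1" "ww p $ 2 = p $ 2" using True by (simp_all add: ww_def)
  ultimately show ?thesis by (metis zero_index)
next
  case False
  then have "ww p $ 3 \<noteq> 0" by (simp add: ww_def)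
  then show ?thesis by auto
qed

lemma curl_ww: "ww p \<bullet> curl ww p = 0"
  by (simp add: curl_def inner_vec_def sum_3 ww_def pd_rules pd_aa pd_sq smooth_rules diffrule algebra_simps)

lemma fol_ww: "foliation_form ww"
  unfolding foliation_form_def using smooth_ww per_ww ww_ne curl_ww by blast

lemma sff_val:
  assumes p: "p \<in> region" and S: "tangent_vf ww S" and T: "tangent_vf ww T"
  shows "sff gg ww S T p = - Qf p (S p) (T p) / norm (ww p)"
proof -
  have inv: "invertible (gg p)" using posdef_invertible posdef[OF p] by blast
  have sS: "smooth_vf S" and zS: "\<forall>q\<in>region. ww q \<bullet> S q = 0" using S unfolding tangent_vf_def by auto
  have sT: "smooth_vf T" and zT: "\<forall>q\<in>region. ww q \<bullet> T q = 0" using T unfolding tangent_vf_def by auto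
  have "sff gg ww S T p = (1 / (2 * norm (ww p))) * (-2 * Qf p (S p) (T p))"
    using sff_generic[of gg p ww S T, OF gw symq inv ww_ne tang_N[OF smooth_ww sT zT p, of S] tang_N[OF smooth_ww sS zS p, of T]]
      W_val[of "S p" "T p" p] by simp
  then show ?thesis by simp
qed


lemma sq_pow: "sq p = (p$1)^2 + (p$2)^2" by (simp add: sq_def power2_eq_square)

lemma inner_sub: "p \<in> inner_part \<Longrightarrow> p \<in> region \<and> sq p < 4/25"
  by (simp add: inner_part_def region_def sq_pow power2_eq_square)

lemma outer_sub: "p \<in> outer_part \<Longrightarrow> p \<in> region \<and> sq p \<ge> 4/9"
  by (simp add: outer_part_def region_def sq_pow power2_eq_square)

theorem lemma4p2:
  shows "\<exists>(w :: real^3 \<Rightarrow> real^3) (g :: real^3 \<Rightarrow> real^3^3).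
     foliation_form w \<and> riem_metric g \<and>
     parabolic g w \<and>
     (\<forall>p\<in>inner_part. w p $ 1 = 0 \<and> w p $ 2 = 0) \<and>
     totally_geodesic_on g w inner_part \<and>
     (\<forall>p\<in>outer_part. w p $ 3 = 0 \<and> p$1 * w p $ 2 - p$2 * w p $ 1 = 0) \<and>
     totally_geodesic_on g w outer_part"
proof (intro exI conjI)
  show "foliation_form ww" by (rule fol_ww)
  show "riem_metric gg" by (rule riem_gg)
  show "parabolic gg ww"
    unfolding parabolic_def
  proof (intro ballI allI impI)
    fix p E1 E2
    assume p: "p \<in> region" and E: "tangent_vf ww E1 \<and> tangent_vf ww E2 \<and> \<not> collinear {0, E1 p, E2 p}"
    let ?n = "norm (ww p)"
    have k1: "ww p \<bullet> E1 p = 0" and k2: "ww p \<bullet> E2 p = 0" using E p unfolding tangent_vf_def by auto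
    have "Qf p (E1 p) (E1 p) * Qf p (E2 p) (E2 p) - Qf p (E1 p) (E2 p) * Qf p (E2 p) (E1 p) = 0"
    proof (cases "sq p < 4/25")
      case True then show ?thesis by (simp add: Q_low)
    next
      case False then have "sq p > 3/20" by simp
      then show ?thesis using Qdet k1 k2 by blast
    qed
    then have "sff gg ww E1 E1 p * sff gg ww E2 E2 p - sff gg ww E1 E2 p * sff gg ww E2 E1 p = 0"
      using E p by (simp add: sff_val field_simps)
    then show "ext_curv gg ww E1 E2 p = 0" unfolding ext_curv_def by simp
  qed
  show "\<forall>p\<in>inner_part. ww p $ 1 = 0 \<and> ww p $ 2 = 0"
  proof
    fix p assume "p \<in> inner_part"
    then have "aa p = 0" using inner_sub[of p] Af_low[of "sq p"] by (simp add: aa_def)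
    then show "ww p $ 1 = 0 \<and> ww p $ 2 = 0" by (simp add: ww_def)
  qed
  show "totally_geodesic_on gg ww inner_part"
    unfolding totally_geodesic_on_def
    using inner_sub by (auto simp: sff_val Q_low)
  show "\<forall>p\<in>outer_part. ww p $ 3 = 0 \<and> p$1 * ww p $ 2 - p$2 * ww p $ 1 = 0"
  proof
    fix p assume "p \<in> outer_part"
    then have "aa p = 1" using outer_sub[of p] Af_high[of "sq p"] by (simp add: aa_def)
    then show "ww p $ 3 = 0 \<and> p$1 * ww p $ 2 - p$2 * ww p $ 1 = 0" by (simp add: ww_def)
  qed
  show "totally_geodesic_on gg ww outer_part"
    unfolding totally_geodesic_on_def
  proof (intro ballI allI impI)
    fix p S T assume p: "p \<in> outer_part" and ST: "tangent_vf ww S \<and> tangent_vf ww T"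
    have r: "p \<in> region" "sq p \<ge> 4/9" using outer_sub[OF p] by auto
    have "ww p \<bullet> S p = 0" using ST r unfolding tangent_vf_def by auto
    then show "sff gg ww S T p = 0" using sff_val[OF r(1)] ST Q_outer[OF r(2)] by simp
  qed
qed


end
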